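(* Let $R\ge0$ and let $X$ be an $R$-rough geodesic metric space. If $X$ is strongly shortcut then every asymptotic cone of $X$ is strongly shortcut.
   Context: $X$ is $R$-rough geodesic if any $x_1,x_2$ are joined by $f\colon[0,\ell]\to X$, $\ell=d(x_1,x_2)$, $f(0)=x_1,f(\ell)=x_2$, with $|d(f(s),f(t))-|s-t||\le R$. An $R$-circle is a map $\alpha\colon S\to X$ from a Riemannian circle $S$ of length $|S|$ with $d(\alpha(p),\alpha(q))\le d_S(p,q)+R$; for $K>1$ it is $\frac1K$-almost isometric if $d(\alpha(p),\alpha(\bar p))\ge\frac1K\cdot\frac{|S|}2$ for all antipodal $p,\bar p$. An $R$-rough geodesic space is strongly shortcut if for some $K>1$ there is a bound on the lengths of its $\frac1K$-almost isometric $R$-circles (an asymptotic cone of $X$ is a geodesic space, so this applies to it with $R=0$). Asymptotic cone: for a nonprincipal ultrafilter $\mathscr U$ on $\mathbb N$, basepoints $b^{(m)}\in X$ and scalars $s^{(m)}\to\infty$, take sequences $(x_m)$ with $d(x_m,b^{(m)})/s^{(m)}$ bounded, pseudometric $\lim_{\mathscr U}d(x_m,x'_m)/s^{(m)}$, and pass to the metric quotient. *)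

theory Defs
  imports "HOL-Analysis.Analysis"
begin

definition rough_geodesic :: "'a set \<Rightarrow> ('a \<Rightarrow> 'a \<Rightarrow> real) \<Rightarrow> real \<Rightarrow> bool" where
  "rough_geodesic S d R \<longleftrightarrow>
     (\<forall>x1\<in>S. \<forall>x2\<in>S. \<exists>f :: real \<Rightarrow> 'a.
        f ` {0..d x1 x2} \<subseteq> S \<and> f 0 = x1 \<and> f (d x1 x2) = x2 \<and>
        (\<forall>s\<in>{0..d x1 x2}. \<forall>t\<in>{0..d x1 x2}. \<bar>d (f s) (f t) - \<bar>s - t\<bar>\<bar> \<le> R))"

text \<open>The Riemannian circle of length L > 0 is modelled as [0,L) with the intrinsic metric.\<close>

definition circ_dist :: "real \<Rightarrow> real \<Rightarrow> real \<Rightarrow> real" where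
  "circ_dist L p q = min \<bar>p - q\<bar> (L - \<bar>p - q\<bar>)"

definition antipode :: "real \<Rightarrow> real \<Rightarrow> real" where
  "antipode L p = (if p + L / 2 < L then p + L / 2 else p - L / 2)"

definition R_circle :: "'a set \<Rightarrow> ('a \<Rightarrow> 'a \<Rightarrow> real) \<Rightarrow> real \<Rightarrow> real \<Rightarrow> (real \<Rightarrow> 'a) \<Rightarrow> bool" where
  "R_circle S d R L \<alpha> \<longleftrightarrow> L > 0 \<and> \<alpha> ` {0..<L} \<subseteq> S \<and>
     (\<forall>p\<in>{0..<L}. \<forall>q\<in>{0..<L}. d (\<alpha> p) (\<alpha> q) \<le> circ_dist L p q + R)"

definition almost_isometric :: "('a \<Rightarrow> 'a \<Rightarrow> real) \<Rightarrow> real \<Rightarrow> real \<Rightarrow> (real \<Rightarrow> 'a) \<Rightarrow> bool" where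
  "almost_isometric d K L \<alpha> \<longleftrightarrow>
     (\<forall>p\<in>{0..<L}. d (\<alpha> p) (\<alpha> (antipode L p)) \<ge> (1 / K) * (L / 2))"

definition strongly_shortcut :: "'a set \<Rightarrow> ('a \<Rightarrow> 'a \<Rightarrow> real) \<Rightarrow> real \<Rightarrow> bool" where
  "strongly_shortcut S d R \<longleftrightarrow>
     (\<exists>K > 1. \<exists>M. \<forall>L \<alpha>. R_circle S d R L \<alpha> \<and> almost_isometric d K L \<alpha> \<longrightarrow> L \<le> M)"

definition nonprincipal_ultrafilter :: "nat filter \<Rightarrow> bool" where
  "nonprincipal_ultrafilter U \<longleftrightarrow> U \<noteq> bot \<and>
     (\<forall>P. eventually P U \<or> eventually (\<lambda>m. \<not> P m) U) \<and>
     (\<forall>n. eventually (\<lambda>m. m \<noteq> n) U)"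

text \<open>Asymptotic cone: admissible sequences, ultralimit pseudometric, metric quotient.\<close>

definition cone_seqs :: "('b \<Rightarrow> 'b \<Rightarrow> real) \<Rightarrow> (nat \<Rightarrow> 'b) \<Rightarrow> (nat \<Rightarrow> real) \<Rightarrow> (nat \<Rightarrow> 'b) set" where
  "cone_seqs d b s = {x. \<exists>B. \<forall>m. d (x m) (b m) / s m \<le> B}"

definition cone_pdist :: "('b \<Rightarrow> 'b \<Rightarrow> real) \<Rightarrow> nat filter \<Rightarrow> (nat \<Rightarrow> real) \<Rightarrow> (nat \<Rightarrow> 'b) \<Rightarrow> (nat \<Rightarrow> 'b) \<Rightarrow> real" where
  "cone_pdist d U s x y = Lim U (\<lambda>m. d (x m) (y m) / s m)"

definition cone_space :: "('b \<Rightarrow> 'b \<Rightarrow> real) \<Rightarrow> nat filter \<Rightarrow> (nat \<Rightarrow> 'b) \<Rightarrow> (nat \<Rightarrow> real) \<Rightarrow> (nat \<Rightarrow> 'b) set set" where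
  "cone_space d U b s =
     (\<lambda>x. {y \<in> cone_seqs d b s. cone_pdist d U s x y = 0}) ` cone_seqs d b s"

definition cone_dist :: "('b \<Rightarrow> 'b \<Rightarrow> real) \<Rightarrow> nat filter \<Rightarrow> (nat \<Rightarrow> real) \<Rightarrow> (nat \<Rightarrow> 'b) set \<Rightarrow> (nat \<Rightarrow> 'b) set \<Rightarrow> real" where
  "cone_dist d U s A B = cone_pdist d U s (SOME x. x \<in> A) (SOME y. y \<in> B)"

end

theory Submission
  imports Defs
begin

lemma np_seq:
  assumes "nonprincipal_ultrafilter U" "eventually P sequentially"
  shows "eventually P U"
proof -
  obtain N where N: "\<And>n. n \<ge> N \<Longrightarrow> P n" using assms(2) by (auto simp: eventually_sequentially)
  have "eventually (\<lambda>m. \<forall>n\<in>{..<N}. m \<noteq> n) U"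
    using assms(1) by (intro eventually_ball_finite) (auto simp: nonprincipal_ultrafilter_def)
  then show ?thesis
    by (rule eventually_mono) (metis N lessThan_iff not_le)
qed

lemma np_lim:
  fixes f :: "nat \<Rightarrow> real"
  assumes U: "nonprincipal_ultrafilter U" and ev: "eventually (\<lambda>m. \<bar>f m\<bar> \<le> B) U"
  shows "(f \<longlongrightarrow> Lim U f) U"
proof -
  have Ub: "U \<noteq> bot" and ult: "\<And>P. eventually P U \<or> eventually (\<lambda>m. \<not> P m) U"
    using U by (auto simp: nonprincipal_ultrafilter_def)
  have "compact (cball (0::real) B)" by simp
  moreover have "filtermap f U \<noteq> bot" using Ub by (simp add: filtermap_bot_iff)
  moreover have "eventually (\<lambda>x. x \<in> cball 0 B) (filtermap f U)"
    using ev by (simp add: eventually_filtermap dist_real_def)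
  ultimately obtain x where x: "inf (nhds x) (filtermap f U) \<noteq> bot"
    unfolding compact_filter by blast
  have "(f \<longlongrightarrow> x) U"
  proof (rule topological_tendstoI)
    fix S :: "real set" assume S: "open S" "x \<in> S"
    show "eventually (\<lambda>m. f m \<in> S) U"
    proof (rule ccontr)
      assume "\<not> eventually (\<lambda>m. f m \<in> S) U"
      then have "eventually (\<lambda>m. f m \<notin> S) U" using ult by blast
      then have "eventually (\<lambda>y. y \<notin> S) (filtermap f U)" by (simp add: eventually_filtermap)
      moreover have "eventually (\<lambda>y. y \<in> S) (nhds x)" using S by (rule eventually_nhds_in_open)
      ultimately have "eventually (\<lambda>_. False) (inf (nhds x) (filtermap f U))"
        unfolding eventually_inf by blast
      then show False using x by (simp add: eventually_False)
    qed
  qed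
  then show ?thesis using Ub by (simp add: tendsto_Lim)
qed

lemma np_pdist:
  fixes b :: "nat \<Rightarrow> 'a::metric_space"
  assumes U: "nonprincipal_ultrafilter U" and s: "filterlim s at_top sequentially"
    and x: "x \<in> cone_seqs dist b s" and y: "y \<in> cone_seqs dist b s"
  shows "((\<lambda>m. dist (x m) (y m) / s m) \<longlongrightarrow> cone_pdist dist U s x y) U"
proof -
  obtain Bx where Bx: "\<And>m. dist (x m) (b m) / s m \<le> Bx" using x by (auto simp: cone_seqs_def)
  obtain By where By: "\<And>m. dist (y m) (b m) / s m \<le> By" using y by (auto simp: cone_seqs_def)
  have "eventually (\<lambda>m. s m > 0) sequentially" using s by (simp add: filterlim_at_top_dense)
  then have "eventually (\<lambda>m. s m > 0) U" using U np_seq by blast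
  then have "eventually (\<lambda>m. \<bar>dist (x m) (y m) / s m\<bar> \<le> Bx + By) U"
  proof (rule eventually_mono)
    fix m assume sm: "s m > 0"
    have "dist (x m) (y m) \<le> dist (x m) (b m) + dist (y m) (b m)" by (metis dist_commute dist_triangle)
    then have "dist (x m) (y m) / s m \<le> dist (x m) (b m) / s m + dist (y m) (b m) / s m"
      using sm by (simp add: add_divide_distrib[symmetric] divide_right_mono)
    then show "\<bar>dist (x m) (y m) / s m\<bar> \<le> Bx + By" using Bx[of m] By[of m] sm by simp
  qed
  then show ?thesis unfolding cone_pdist_def by (rule np_lim[OF U])
qed

lemma np_space:
  fixes b :: "nat \<Rightarrow> 'a::metric_space"
  assumes U: "nonprincipal_ultrafilter U" and A: "A \<in> cone_space dist U b s"
  shows "(SOME x. x \<in> A) \<in> A" "A \<subseteq> cone_seqs dist b s"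
proof -
  obtain x where x: "x \<in> cone_seqs dist b s" and Aeq: "A = {y \<in> cone_seqs dist b s. cone_pdist dist U s x y = 0}"
    using A by (auto simp: cone_space_def)
  have "U \<noteq> bot" using U by (simp add: nonprincipal_ultrafilter_def)
  then have "cone_pdist dist U s x x = 0" unfolding cone_pdist_def by (simp add: tendsto_Lim)
  then have "x \<in> A" using x Aeq by simp
  then show "(SOME x. x \<in> A) \<in> A" by (metis someI)
  show "A \<subseteq> cone_seqs dist b s" using Aeq by auto
qed

lemma np_dist:
  fixes b :: "nat \<Rightarrow> 'a::metric_space"
  assumes U: "nonprincipal_ultrafilter U" and s: "filterlim s at_top sequentially"
    and A: "A \<in> cone_space dist U b s" and B: "B \<in> cone_space dist U b s"
  shows "((\<lambda>m. dist ((SOME x. x \<in> A) m) ((SOME x. x \<in> B) m) / s m) \<longlongrightarrow> cone_dist dist U s A B) U"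
  unfolding cone_dist_def using np_space[OF U A] np_space[OF U B]
  by (intro np_pdist[OF U s]) auto


definition cind :: "nat \<Rightarrow> nat \<Rightarrow> nat \<Rightarrow> real" where
  "cind n a b = min \<bar>real a - real b\<bar> (real n - \<bar>real a - real b\<bar>)"

lemma circle_construct:
  fixes Y :: "nat \<Rightarrow> 'a::metric_space"
  assumes R: "R \<ge> 0" and rg: "rough_geodesic (UNIV :: 'a set) dist R"
    and nk: "n = 2 * k" and k: "k \<ge> 1" and h: "h > 0"
    and grid: "\<And>a b. a < n \<Longrightarrow> b < n \<Longrightarrow> dist (Y a) (Y b) \<le> h * cind n a b"
    and seg: "\<And>i. i < n \<Longrightarrow> dist (Y i) (Y (Suc i mod n)) + 2 * R \<le> h"
  shows "\<exists>\<beta>. R_circle UNIV dist R (real n * h) \<beta> \<and>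
     (\<forall>p\<in>{0..<real n * h}. \<exists>i<n. dist (\<beta> p) (Y i) \<le> h \<and>
         dist (\<beta> (antipode (real n * h) p)) (Y ((i + k) mod n)) \<le> h)"
proof -
  define P where "P = (\<lambda>x1 x2 (f :: real \<Rightarrow> 'a). f 0 = x1 \<and> f (dist x1 x2) = x2 \<and>
        (\<forall>s\<in>{0..dist x1 x2}. \<forall>t\<in>{0..dist x1 x2}. \<bar>dist (f s) (f t) - \<bar>s - t\<bar>\<bar> \<le> R))"
  define G where "G x1 x2 = (SOME f. P x1 x2 f)" for x1 x2
  have GP: "P x1 x2 (G x1 x2)" for x1 x2
  proof -
    have "\<exists>f. P x1 x2 f" using rg unfolding rough_geodesic_def P_def by blast
    then show ?thesis unfolding G_def by (rule someI_ex)
  qed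
  define l where "l i = dist (Y i) (Y (Suc i mod n))" for i
  define c where "c i t = max 0 (min (t - R) (l i))" for i t
  define g where "g i t = G (Y i) (Y (Suc i mod n)) (c i t)" for i t
  define \<beta> where "\<beta> p = g (nat \<lfloor>p / h\<rfloor>) (p - real (nat \<lfloor>p / h\<rfloor>) * h)" for p
  have c01: "0 \<le> c i t" "c i t \<le> l i" for i t
    unfolding c_def l_def by auto
  have rough: "dist (G (Y i) (Y (Suc i mod n)) u) (G (Y i) (Y (Suc i mod n)) v) \<le> \<bar>u - v\<bar> + R"
    if "0 \<le> u" "u \<le> l i" "0 \<le> v" "v \<le> l i" for i u v
    using GP[of "Y i" "Y (Suc i mod n)"] that unfolding P_def l_def by force
  have G0: "G (Y i) (Y (Suc i mod n)) 0 = Y i" for i using GP unfolding P_def by blast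
  have Gl: "G (Y i) (Y (Suc i mod n)) (l i) = Y (Suc i mod n)" for i using GP unfolding P_def l_def by blast
  have F1: "nat \<lfloor>p / h\<rfloor> < n \<and> 0 \<le> p - real (nat \<lfloor>p / h\<rfloor>) * h \<and> p - real (nat \<lfloor>p / h\<rfloor>) * h < h"
    if "0 \<le> p" "p < real n * h" for p
  proof -
    have a: "0 \<le> p / h" "p / h < real n" using that h by (auto simp: field_simps)
    then have "\<lfloor>p / h\<rfloor> < int n" by linarith
    moreover have "real (nat \<lfloor>p / h\<rfloor>) = of_int \<lfloor>p / h\<rfloor>" using a by simp
    moreover have "of_int \<lfloor>p / h\<rfloor> * h \<le> p" "p < (of_int \<lfloor>p / h\<rfloor> + 1) * h"
      using h by (metis floor_divide_lower, metis floor_divide_upper)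
    ultimately show ?thesis by (auto simp: algebra_simps)
  qed
  have F2: "\<beta> (real i * h + t) = g i t" if "0 \<le> t" "t < h" for i t
  proof -
    have "(real i * h + t) / h = real i + t / h" using h by (simp add: field_simps)
    moreover have "0 \<le> t / h" "t / h < 1" using that h by auto
    ultimately have "\<lfloor>(real i * h + t) / h\<rfloor> = int i" by (simp add: floor_eq_iff)
    then show ?thesis unfolding \<beta>_def by simp
  qed
  have F3: "dist (g i t) (Y i) \<le> t \<and> dist (g i t) (Y (Suc i mod n)) \<le> h - t"
    if "i < n" "0 \<le> t" "t \<le> h" for i t
  proof
    show "dist (g i t) (Y i) \<le> t"
    proof (cases "c i t = 0")
      case True then show ?thesis using G0 that unfolding g_def by simp
    next
      case False
      then have "c i t \<le> t - R" unfolding c_def by auto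
      moreover have "dist (g i t) (Y i) \<le> c i t + R"
        using rough[of "c i t" i 0] c01[of i t] G0 unfolding g_def by (simp add: l_def)
      ultimately show ?thesis by simp
    qed
    show "dist (g i t) (Y (Suc i mod n)) \<le> h - t"
    proof (cases "c i t = l i")
      case True then show ?thesis using Gl that unfolding g_def by simp
    next
      case False
      then have "c i t \<ge> t - R" using c01[of i t] unfolding c_def by linarith
      moreover have "dist (g i t) (Y (Suc i mod n)) \<le> l i - c i t + R"
        using rough[of "c i t" i "l i"] c01[of i t] Gl unfolding g_def by (simp add: l_def)
      moreover have "l i + 2 * R \<le> h" using seg[OF that(1)] by (simp add: l_def)
      ultimately show ?thesis by simp
    qed
  qed
  have F4: "dist (g i t) (g i t') \<le> \<bar>t - t'\<bar> + R" for i t t'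
  proof -
    have "dist (g i t) (g i t') \<le> \<bar>c i t - c i t'\<bar> + R"
      using rough[of "c i t" i "c i t'"] c01 unfolding g_def by simp
    moreover have "\<bar>c i t - c i t'\<bar> \<le> \<bar>t - t'\<bar>" unfolding c_def by (simp add: abs_le_iff max_def min_def abs_if)
    ultimately show ?thesis by simp
  qed
  have F5: "dist (g i t) (g j t') \<le> circ_dist (real n * h) (real i * h + t) (real j * h + t')"
    if "i < j" "j < n" "0 \<le> t" "t < h" "0 \<le> t'" "t' < h" for i j t t'
  proof -
    have si: "Suc i mod n = Suc i" using that by simp
    have c1: "cind n (Suc i) j \<le> real j - real (Suc i)"
      unfolding cind_def using that by auto
    have c2: "cind n i (Suc j mod n) \<le> real n - (real (Suc j) - real i)"
    proof (cases "Suc j = n")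
      case True then show ?thesis unfolding cind_def using that by auto
    next
      case False then have "Suc j mod n = Suc j" using that by simp
      then show ?thesis unfolding cind_def using that by auto
    qed
    have d1: "dist (g i t) (g j t') \<le> (h - t) + h * cind n (Suc i) j + t'"
    proof -
      have "dist (g i t) (g j t') \<le> dist (g i t) (Y (Suc i)) + dist (Y (Suc i)) (Y j) + dist (Y j) (g j t')"
        by (meson add_mono dist_triangle order_trans order_refl)
      moreover have "dist (g i t) (Y (Suc i)) \<le> h - t" using F3[of i t] si that by simp
      moreover have "dist (Y (Suc i)) (Y j) \<le> h * cind n (Suc i) j" using grid that by simp
      moreover have "dist (Y j) (g j t') \<le> t'" using F3[of j t'] that by (simp add: dist_commute)
      ultimately show ?thesis by linarith
    qed
    have d2: "dist (g i t) (g j t') \<le> t + h * cind n i (Suc j mod n) + (h - t')"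
    proof -
      have "dist (g i t) (g j t') \<le> dist (g i t) (Y i) + dist (Y i) (Y (Suc j mod n)) + dist (Y (Suc j mod n)) (g j t')"
        by (meson add_mono dist_triangle order_trans order_refl)
      moreover have "dist (g i t) (Y i) \<le> t" using F3[of i t] that by simp
      moreover have "dist (Y i) (Y (Suc j mod n)) \<le> h * cind n i (Suc j mod n)"
        using grid that by simp
      moreover have "dist (Y (Suc j mod n)) (g j t') \<le> h - t'" using F3[of j t'] that by (simp add: dist_commute)
      ultimately show ?thesis by linarith
    qed
    have e1: "h * cind n (Suc i) j \<le> h * (real j - real (Suc i))" using c1 h by simp
    have e2: "h * cind n i (Suc j mod n) \<le> h * (real n - (real (Suc j) - real i))" using c2 h by simp
    have ij: "real i + 1 \<le> real j" using that by simp
    have pq: "real i * h + t < real j * h + t'"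
    proof -
      have "real i * h + t < (real i + 1) * h" using that by (simp add: algebra_simps)
      also have "\<dots> \<le> real j * h" using ij h by simp
      finally show ?thesis using that by simp
    qed
    show ?thesis
    proof -
      have "\<bar>real i * h + t - (real j * h + t')\<bar> = (real j * h + t') - (real i * h + t)" using pq by simp
      then show ?thesis unfolding circ_dist_def using d1 d2 e1 e2
        by (simp add: algebra_simps)
    qed
  qed
  show ?thesis
  proof (rule exI, intro conjI ballI)
    show "R_circle UNIV dist R (real n * h) \<beta>"
      unfolding R_circle_def
    proof (intro conjI ballI)
      show "real n * h > 0" using nk k h by simp
      show "\<beta> ` {0..<real n * h} \<subseteq> UNIV" by simp
      fix p q assume p: "p \<in> {0..<real n * h}" and q: "q \<in> {0..<real n * h}"
      define i where "i = nat \<lfloor>p / h\<rfloor>"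
      define j where "j = nat \<lfloor>q / h\<rfloor>"
      define t where "t = p - real i * h"
      define t' where "t' = q - real j * h"
      have i: "i < n" "0 \<le> t" "t < h" proof -
        have "0 \<le> p" "p < real n * h" using p by auto
        note F1[OF this]
        then show "i < n" "0 \<le> t" "t < h" unfolding t_def i_def by auto
      qed
      have j: "j < n" "0 \<le> t'" "t' < h" proof -
        have "0 \<le> q" "q < real n * h" using q by auto
        note F1[OF this]
        then show "j < n" "0 \<le> t'" "t' < h" unfolding t'_def j_def by auto
      qed
      have pe: "p = real i * h + t" and qe: "q = real j * h + t'" unfolding t_def t'_def by auto
      have bp: "\<beta> p = g i t" using F2 i pe by simp
      have bq: "\<beta> q = g j t'" using F2 j qe by simp
      have cs: "circ_dist L x y = circ_dist L y x" for L x y unfolding circ_dist_def by (simp add: abs_minus_commute)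
      consider "i = j" | "i < j" | "j < i" by linarith
      then show "dist (\<beta> p) (\<beta> q) \<le> circ_dist (real n * h) p q + R"
      proof cases
        case 1
        have "dist (\<beta> p) (\<beta> q) \<le> \<bar>t - t'\<bar> + R" using F4 bp bq 1 by simp
        moreover have "\<bar>p - q\<bar> = \<bar>t - t'\<bar>" using pe qe 1 by simp
        moreover have "2 * h \<le> real n * h" using nk k h by simp
        moreover have "\<bar>t - t'\<bar> < h" using i j by simp
        ultimately show ?thesis unfolding circ_dist_def by simp
      next
        case 2
        then show ?thesis using F5[of i j t t'] i j bp bq pe qe R by simp
      next
        case 3
        then have "dist (\<beta> q) (\<beta> p) \<le> circ_dist (real n * h) q p" using F5[of j i t' t] i j bp bq pe qe by simp
        then show ?thesis using cs R by (simp add: dist_commute)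
      qed
    qed
    fix p assume p: "p \<in> {0..<real n * h}"
    define i where "i = nat \<lfloor>p / h\<rfloor>"
    define t where "t = p - real i * h"
    have i: "i < n" "0 \<le> t" "t < h" proof -
        have "0 \<le> p" "p < real n * h" using p by auto
        note F1[OF this]
        then show "i < n" "0 \<le> t" "t < h" unfolding t_def i_def by auto
      qed
    have pe: "p = real i * h + t" unfolding t_def by auto
    have bp: "\<beta> p = g i t" using F2 i pe by simp
    show "\<exists>i<n. dist (\<beta> p) (Y i) \<le> h \<and> dist (\<beta> (antipode (real n * h) p)) (Y ((i + k) mod n)) \<le> h"
    proof (intro exI conjI)
      show "i < n" by fact
      show "dist (\<beta> p) (Y i) \<le> h" using F3[of i t] i bp by simp
      show "dist (\<beta> (antipode (real n * h) p)) (Y ((i + k) mod n)) \<le> h"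
      proof (cases "i < k")
        case True
        have "p + real n * h / 2 = real (i + k) * h + t" using pe nk by (simp add: algebra_simps)
        moreover have "real (i + k) * h + t < real n * h"
        proof -
          have "real (i + k) + 1 \<le> real n" using True nk by simp
          then have "(real (i + k) + 1) * h \<le> real n * h" using h by (simp add: mult_right_mono)
          then show ?thesis using i by (simp add: algebra_simps)
        qed
        ultimately have "antipode (real n * h) p = real (i + k) * h + t" unfolding antipode_def by simp
        moreover have "(i + k) mod n = i + k" using True nk by simp
        moreover have "i + k < n" using True nk by simp
        ultimately show ?thesis using F2[of t "i + k"] F3[of "i + k" t] i by simp
      next
        case False
        have "p + real n * h / 2 = real (i + k) * h + t" using pe nk by (simp add: algebra_simps)
        moreover have "real n * h \<le> real (i + k) * h + t"
        proof -
          have "real n \<le> real (i + k)" using False nk by simp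
          then have "real n * h \<le> real (i + k) * h" using h by (simp add: mult_right_mono)
          then show ?thesis using i by linarith
        qed
        moreover have "p - real n * h / 2 = real (i - k) * h + t" using pe nk False by (simp add: algebra_simps of_nat_diff)
        ultimately have "antipode (real n * h) p = real (i - k) * h + t" unfolding antipode_def by simp
        moreover have "(i + k) mod n = i - k"
        proof -
          have "i + k = (i - k) + n" using False nk by simp
          then have "(i + k) mod n = ((i - k) + n) mod n" by simp
          also have "\<dots> = (i - k) mod n" by simp
          also have "\<dots> = i - k" using i(1) by simp
          finally show ?thesis .
        qed
        moreover have "i - k < n" using i by simp
        ultimately show ?thesis using F2[of t "i - k"] F3[of "i - k" t] i by simp
      qed
    qed
  qed
qed


lemma circ_grid:
  assumes "L > 0" "n > 0"
  shows "circ_dist L (real a * L / real n) (real b * L / real n) = L / real n * cind n a b"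
proof -
  have "\<bar>real a * L / real n - real b * L / real n\<bar> = L / real n * \<bar>real a - real b\<bar>"
  proof -
    have "real a * L / real n - real b * L / real n = L / real n * (real a - real b)"
      using assms by (simp add: field_simps)
    then show ?thesis using assms by (simp add: abs_mult)
  qed
  moreover have "L - L / real n * \<bar>real a - real b\<bar> = L / real n * (real n - \<bar>real a - real b\<bar>)"
    using assms by (simp add: field_simps)
  ultimately show ?thesis unfolding circ_dist_def cind_def using assms
    by (simp add: min_mult_distrib_left)
qed

lemma antip_grid:
  assumes L: "L > 0" and nk: "n = 2 * k" and k: "k \<ge> 1" and i: "i < n"
  shows "antipode L (real i * L / real n) = real ((i + k) mod n) * L / real n"
proof (cases "i < k")
  case True
  have e: "real i * L / real n + L / 2 = real (i + k) * L / real n" using nk k by (simp add: field_simps)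
  have "real (i + k) * L / real n < L"
  proof -
    have "real (i + k) < real n" using True nk by simp
    then have "real (i + k) * L < real n * L" using L by simp
    then show ?thesis using nk k by (simp add: field_simps)
  qed
  moreover have "(i + k) mod n = i + k" using True nk by simp
  ultimately show ?thesis unfolding antipode_def e by simp
next
  case False
  have e: "real i * L / real n + L / 2 = real (i + k) * L / real n" using nk k by (simp add: field_simps)
  have "\<not> real (i + k) * L / real n < L"
  proof -
    have "real n \<le> real (i + k)" using False nk by simp
    then have "real n * L \<le> real (i + k) * L" using L by simp
    then show ?thesis using nk k by (simp add: field_simps)
  qed
  moreover have "real i * L / real n - L / 2 = real (i - k) * L / real n"
    using nk k False by (simp add: field_simps of_nat_diff)
  moreover have "(i + k) mod n = i - k"
  proof -
    have "i + k = (i - k) + n" using False nk by simp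
    then have "(i + k) mod n = ((i - k) + n) mod n" by simp
    also have "\<dots> = (i - k) mod n" by simp
    also have "\<dots> = i - k" using i by simp
    finally show ?thesis .
  qed
  ultimately show ?thesis unfolding antipode_def e by simp
qed

lemma cind_ge1: "a < n \<Longrightarrow> b < n \<Longrightarrow> a \<noteq> b \<Longrightarrow> cind n a b \<ge> 1"
  unfolding cind_def by auto

lemma cind_0: "cind n a a = 0 \<or> cind n a a \<le> 0" unfolding cind_def by auto

lemma cind_suc: "i < n \<Longrightarrow> cind n i (Suc i mod n) \<le> 1"
proof (cases "Suc i = n")
  case True then show ?thesis unfolding cind_def by auto
next
  case False
  assume "i < n"
  then have "Suc i mod n = Suc i" using False by simp
  then show ?thesis unfolding cind_def by auto
qed


theorem corollary3p12:
  fixes R :: real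
    and U :: "nat filter" and b :: "nat \<Rightarrow> 'a::metric_space" and s :: "nat \<Rightarrow> real"
  assumes "R \<ge> 0"
    and "rough_geodesic (UNIV :: 'a set) dist R"
    and "strongly_shortcut (UNIV :: 'a set) dist R"
    and "nonprincipal_ultrafilter U"
    and "filterlim s at_top sequentially"
  shows "strongly_shortcut (cone_space dist U b s) (cone_dist dist U s) 0"
proof -
  note R = assms(1) and rg = assms(2) and U = assms(4) and sinf = assms(5)
  obtain K M where K: "K > 1" and KM: "\<And>L \<alpha>. R_circle (UNIV :: 'a set) dist R L \<alpha> \<Longrightarrow> almost_isometric dist K L \<alpha> \<Longrightarrow> L \<le> M"
    using assms(3) unfolding strongly_shortcut_def by (metis (no_types, lifting))
  define K' where "K' = (K + 1) / 2"
  define lam where "lam = (3 * K + 1) / (2 * (K + 1))"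
  define g where "g = (K - 1) / (4 * K * (K + 1))"
  have K'1: "K' > 1" using K unfolding K'_def by simp
  have lam1: "lam > 1" using K unfolding lam_def by (simp add: field_simps)
  have g0: "g > 0" using K unfolding g_def by simp
  have gid: "1 / (2 * K') - lam / (2 * K) = g" using K unfolding K'_def lam_def g_def
    by (simp add: divide_simps)
  define cone where "cone = cone_space dist U b s"
  define cd where "cd = cone_dist (dist :: 'a \<Rightarrow> 'a \<Rightarrow> real) U s"
  have "\<forall>L \<alpha>. R_circle cone cd 0 L \<alpha> \<and> almost_isometric cd K' L \<alpha> \<longrightarrow> L \<le> 0"
  proof (intro allI impI, elim conjE)
    fix L \<alpha> assume circ: "R_circle cone cd 0 L \<alpha>" and ai: "almost_isometric cd K' L \<alpha>"
    have L: "L > 0" using circ unfolding R_circle_def by simp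
    have \<alpha>S: "\<And>p. p \<in> {0..<L} \<Longrightarrow> \<alpha> p \<in> cone" using circ unfolding R_circle_def by auto
    have \<alpha>L: "\<And>p q. p \<in> {0..<L} \<Longrightarrow> q \<in> {0..<L} \<Longrightarrow> cd (\<alpha> p) (\<alpha> q) \<le> circ_dist L p q"
      using circ unfolding R_circle_def by auto
    have \<alpha>A: "\<And>p. p \<in> {0..<L} \<Longrightarrow> cd (\<alpha> p) (\<alpha> (antipode L p)) \<ge> (1 / K') * (L / 2)"
      using ai unfolding almost_isometric_def by auto
    define k :: nat where "k = nat \<lceil>2 * lam / g\<rceil> + 1"
    define n where "n = 2 * k"
    have k1: "k \<ge> 1" unfolding k_def by simp
    have n0: "n > 0" "real n > 0" using k1 unfolding n_def by auto
    have nbig: "real n \<ge> 4 * lam / g"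
    proof -
      have "2 * lam / g \<le> real k" unfolding k_def by linarith
      then show ?thesis unfolding n_def by simp
    qed
    define eps where "eps = (lam - 1) * L / (2 * real n)"
    have eps0: "eps > 0" unfolding eps_def using lam1 L n0 by simp
    define pt where "pt a = real a * L / real n" for a
    have pt: "pt a \<in> {0..<L}" if "a < n" for a
    proof -
      have "real a < real n" using that by simp
      then have "real a * L < real n * L" using L by simp
      then show ?thesis unfolding pt_def using L n0 by (simp add: field_simps)
    qed
    define A where "A a = \<alpha> (pt a)" for a
    define y where "y a = (SOME x. x \<in> A a)" for a
    have Acone: "A a \<in> cone_space dist U b s" if "a < n" for a
      using \<alpha>S[OF pt[OF that]] unfolding A_def cone_def .
    have T: "((\<lambda>m. dist (y a m) (y c m) / s m) \<longlongrightarrow> cd (A a) (A c)) U" if "a < n" "c < n" for a c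
      unfolding y_def cd_def by (rule np_dist[OF U sinf Acone[OF that(1)] Acone[OF that(2)]])
    have C1: "cd (A a) (A c) \<le> L / real n * cind n a c" if "a < n" "c < n" for a c
      using \<alpha>L[OF pt[OF that(1)] pt[OF that(2)]] circ_grid[OF L n0(1)] unfolding A_def pt_def by simp
    have C2: "cd (A i) (A ((i + k) mod n)) \<ge> L / (2 * K')" if "i < n" for i
      using \<alpha>A[OF pt[OF that]] antip_grid[OF L n_def k1 that] unfolding A_def pt_def by simp
    have ev1: "eventually (\<lambda>m. \<forall>ac\<in>{..<n} \<times> {..<n}.
        \<bar>dist (y (fst ac) m) (y (snd ac) m) / s m - cd (A (fst ac)) (A (snd ac))\<bar> < eps) U"
    proof (rule eventually_ball_finite)
      show "finite ({..<n} \<times> {..<n})" by simp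
      show "\<forall>ac\<in>{..<n} \<times> {..<n}. eventually (\<lambda>m.
         \<bar>dist (y (fst ac) m) (y (snd ac) m) / s m - cd (A (fst ac)) (A (snd ac))\<bar> < eps) U"
      proof
        fix ac assume "ac \<in> {..<n} \<times> {..<n}"
        then have "fst ac < n" "snd ac < n" by auto
        from tendstoD[OF T[OF this] eps0] show "eventually (\<lambda>m.
         \<bar>dist (y (fst ac) m) (y (snd ac) m) / s m - cd (A (fst ac)) (A (snd ac))\<bar> < eps) U"
          by (simp add: dist_real_def)
      qed
    qed
    have evs: "eventually (\<lambda>m. C \<le> s m) U" for C
      using np_seq[OF U] sinf unfolding filterlim_at_top by blast
    have "eventually (\<lambda>m. 1 \<le> s m \<and> 2 * R / eps \<le> s m \<and> \<bar>M\<bar> / (lam * L) + 1 \<le> s m \<and>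
        (\<forall>ac\<in>{..<n} \<times> {..<n}.
        \<bar>dist (y (fst ac) m) (y (snd ac) m) / s m - cd (A (fst ac)) (A (snd ac))\<bar> < eps)) U"
      using evs evs evs ev1 by (intro eventually_conj) auto
    moreover have "U \<noteq> bot" using U unfolding nonprincipal_ultrafilter_def by simp
    ultimately obtain m where s1: "1 \<le> s m" and s2: "2 * R / eps \<le> s m" and s3: "\<bar>M\<bar> / (lam * L) + 1 \<le> s m"
      and close: "\<And>a c. a < n \<Longrightarrow> c < n \<Longrightarrow> \<bar>dist (y a m) (y c m) / s m - cd (A a) (A c)\<bar> < eps"
      using eventually_happens' by fastforce
    define S where "S = s m"
    have S0: "S > 0" using s1 unfolding S_def by simp
    define h where "h = lam * S * L / real n"
    have h0: "h > 0" unfolding h_def using lam1 S0 L n0 by simp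
    define Y where "Y a = y a m" for a
    have up: "dist (Y a) (Y c) < S * (L / real n * cind n a c + eps)" if "a < n" "c < n" for a c
    proof -
      have "dist (Y a) (Y c) / S < L / real n * cind n a c + eps"
        using close[OF that] C1[OF that] unfolding Y_def S_def by linarith
      then show ?thesis using S0 by (simp add: field_simps)
    qed
    have grid: "dist (Y a) (Y c) \<le> h * cind n a c" if "a < n" "c < n" for a c
    proof (cases "a = c")
      case True then show ?thesis unfolding cind_def by simp
    next
      case False
      have c1: "cind n a c \<ge> 1" using cind_ge1[OF that False] .
      have "S * (L / real n * cind n a c + eps) \<le> h * cind n a c"
      proof -
        have "eps \<le> (lam - 1) * (L / real n) * cind n a c"
        proof -
          have "eps \<le> (lam - 1) * (L / real n)" unfolding eps_def using lam1 L n0 by (simp add: field_simps)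
          also have "\<dots> \<le> (lam - 1) * (L / real n) * cind n a c"
          proof -
            have "0 \<le> (lam - 1) * (L / real n)" using lam1 L n0 by simp
            from mult_left_mono[OF c1 this] show ?thesis by simp
          qed
          finally show ?thesis .
        qed
        moreover have "(lam - 1) * (L / real n) * cind n a c = lam * (L / real n) * cind n a c - L / real n * cind n a c"
          using n0 by (simp add: field_simps)
        ultimately have "L / real n * cind n a c + eps \<le> lam * (L / real n) * cind n a c"
          by linarith
        then have "S * (L / real n * cind n a c + eps) \<le> S * (lam * (L / real n) * cind n a c)"
          using S0 by (intro mult_left_mono) auto
        then show ?thesis unfolding h_def by (simp add: field_simps)
      qed
      then show ?thesis using up[OF that] by simp
    qed
    have seg: "dist (Y i) (Y (Suc i mod n)) + 2 * R \<le> h" if "i < n" for i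
    proof -
      have sn: "Suc i mod n < n" using n0 by simp
      have "dist (Y i) (Y (Suc i mod n)) < S * (L / real n * cind n i (Suc i mod n) + eps)"
        by (rule up[OF that sn])
      also have "\<dots> \<le> S * (L / real n + eps)"
      proof -
        have "L / real n * cind n i (Suc i mod n) \<le> L / real n * 1"
          using cind_suc[OF that] L n0 by (intro mult_left_mono) auto
        then show ?thesis using S0 by (intro mult_left_mono) auto
      qed
      finally have d: "dist (Y i) (Y (Suc i mod n)) < S * (L / real n + eps)" .
      have "2 * R \<le> S * eps" using s2 eps0 unfolding S_def by (simp add: field_simps)
      moreover have "h = S * (L / real n + eps) + S * eps"
        unfolding h_def eps_def using n0 by (simp add: field_simps)
      ultimately show ?thesis using d by linarith
    qed
    obtain \<beta> where bc: "R_circle UNIV dist R (real n * h) \<beta>"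
      and bp: "\<And>p. p \<in> {0..<real n * h} \<Longrightarrow> \<exists>i<n. dist (\<beta> p) (Y i) \<le> h \<and>
         dist (\<beta> (antipode (real n * h) p)) (Y ((i + k) mod n)) \<le> h"
      using circle_construct[OF R rg n_def k1 h0 grid seg] by blast
    have nh: "real n * h = lam * S * L" unfolding h_def using n0 by simp
    have key: "L / (2 * K') - eps - 2 * lam * L / real n \<ge> lam * L / (2 * K)"
    proof -
      have "eps + 2 * lam * L / real n \<le> (5 / 2) * lam * L / real n"
        unfolding eps_def using n0 lam1 L by (simp add: field_simps)
      also have "\<dots> \<le> g * L"
      proof -
        have "4 * lam \<le> g * real n" using nbig g0 by (simp add: field_simps)
        then have "(5 / 2) * lam \<le> g * real n" using lam1 by linarith
        then have "(5 / 2) * lam * L \<le> g * real n * L" using L by simp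
        then show ?thesis using n0 by (simp add: field_simps)
      qed
      also have "g * L = L / (2 * K') - lam * L / (2 * K)"
      proof -
        have "g * L = (1 / (2 * K') - lam / (2 * K)) * L" using gid by simp
        also have "\<dots> = L / (2 * K') - lam * L / (2 * K)" using K K'1 by (simp add: field_simps)
        finally show ?thesis .
      qed
      finally show ?thesis by simp
    qed
    have "almost_isometric dist K (real n * h) \<beta>"
      unfolding almost_isometric_def
    proof
      fix p assume p: "p \<in> {0..<real n * h}"
      obtain i where i: "i < n" and d1: "dist (\<beta> p) (Y i) \<le> h"
        and d2: "dist (\<beta> (antipode (real n * h) p)) (Y ((i + k) mod n)) \<le> h"
        using bp[OF p] by blast
      have ik: "(i + k) mod n < n" using n0 by simp
      have "dist (Y i) (Y ((i + k) mod n)) / S > cd (A i) (A ((i + k) mod n)) - eps"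
        using close[OF i ik] unfolding Y_def S_def by linarith
      then have "dist (Y i) (Y ((i + k) mod n)) / S > L / (2 * K') - eps" using C2[OF i] by linarith
      then have dY: "dist (Y i) (Y ((i + k) mod n)) > S * (L / (2 * K') - eps)"
        using S0 by (simp add: field_simps)
      have tri: "dist (Y i) (Y ((i + k) mod n)) \<le> dist (\<beta> p) (Y i) + dist (\<beta> p) (\<beta> (antipode (real n * h) p))
          + dist (\<beta> (antipode (real n * h) p)) (Y ((i + k) mod n))"
      proof -
        have "dist (Y i) (Y ((i + k) mod n)) \<le> dist (Y i) (\<beta> p) + dist (\<beta> p) (Y ((i + k) mod n))"
          by (rule dist_triangle)
        moreover have "dist (\<beta> p) (Y ((i + k) mod n)) \<le> dist (\<beta> p) (\<beta> (antipode (real n * h) p))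
          + dist (\<beta> (antipode (real n * h) p)) (Y ((i + k) mod n))"
          by (rule dist_triangle)
        ultimately show ?thesis by (simp add: dist_commute)
      qed
      have "S * (lam * L / (2 * K)) \<le> S * (L / (2 * K') - eps - 2 * lam * L / real n)"
        by (rule mult_left_mono[OF key]) (use S0 in simp)
      also have "\<dots> = S * (L / (2 * K') - eps) - 2 * h" unfolding h_def by (simp add: algebra_simps)
      finally have "S * (lam * L / (2 * K)) \<le> dist (\<beta> p) (\<beta> (antipode (real n * h) p))"
        using dY tri d1 d2 by linarith
      moreover have "1 / K * (real n * h / 2) = S * (lam * L / (2 * K))" unfolding nh by (simp add: field_simps)
      ultimately show "1 / K * (real n * h / 2) \<le> dist (\<beta> p) (\<beta> (antipode (real n * h) p))" by simp
    qed
    then have "real n * h \<le> M" using KM bc by blast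
    moreover have "lam * S * L > M"
    proof -
      have "\<bar>M\<bar> / (lam * L) < S" using s3 unfolding S_def by simp
      then have "\<bar>M\<bar> < S * (lam * L)" using lam1 L by (simp add: field_simps)
      then show ?thesis by (simp add: algebra_simps)
    qed
    ultimately show "L \<le> 0" using nh by simp
  qed
  then show ?thesis unfolding strongly_shortcut_def cone_def cd_def using K'1 by blast
qed

end
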